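(* In the standing setting below, let $\mathcal{O}$ be the set of popular sets. Then $\mathcal{F}:=\mathcal{C}(M)\cup\mathcal{O}$ satisfies the strong circuit elimination axiom: for every $F_0,F_1\in\mathcal{F}$, $e\in F_0\cap F_1$ and $f\in F_0\triangle F_1$ there is $G\in\mathcal{F}$ with $f\in G\subseteq(F_0\cup F_1)\setminus\{e\}$.
   Context: Standing setting: $M,N$ are finitary matroids on a common ground set $E$; $\mathcal{C}(M)$ is the set of circuits of $M$; $I\in\mathcal{I}(M)\cap\mathcal{I}(N)$ is maximal among common independent sets; $\kappa:=r(N/I)$ is an uncountable regular cardinal and $r(M/I)<\kappa$. Fix a base $J_M$ of $M/I$ and a base $J_N$ of $N/I$, put $B_M:=I\cup J_M$, $B_N:=I\cup J_N$, $b:=(B_M,B_N)$. For a base $B$ of a matroid $M$, $D_M(B)$ is the digraph on $E$ with arc $ef$ iff $e\notin B$ and $f\in C_M(e,B)\setminus\{e\}$ ($C_M(e,B)$ the fundamental circuit); $D(b):=D_M(B_M)\cup D_N^{-1}(B_N)$ where $D^{-1}$ reverses all arcs. A $b$-path is a finite directed path $P$ in $D(b)$ whose initial vertex lies in $B_N\setminus B_M$; $\mathsf{ter}(P)$ is its terminal vertex and $\mathsf{ter}(\mathcal{P})=\{\mathsf{ter}(P):P\in\mathcal{P}\}$. A $b$-path-system is a set of $\kappa$ pairwise disjoint $b$-paths. A $\Delta$-system is a family of sets any two of which intersect in the same set $K$ (the kernel); its petals are $C\setminus K$. A nonempty $K\subseteq E$ is popular if there exist a $b$-path-system $\mathcal{P}$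 and a $\Delta$-system $\mathcal{D}$ of $\kappa$ many circuits of $M$ with kernel $K$ such that every petal of $\mathcal{D}$ is contained in $I\cup\mathsf{ter}(\mathcal{P})$. *)

theory Defs
  imports Main
begin

unbundle cardinal_syntax

definition maximal_in :: "'a set set \<Rightarrow> 'a set \<Rightarrow> bool" where
  "maximal_in \<I> B \<longleftrightarrow> B \<in> \<I> \<and> (\<forall>B'\<in>\<I>. B \<subseteq> B' \<longrightarrow> B' = B)"

text \<open>Infinite matroid axioms (I1)-(I3), (IM) of Bruhn et al., plus finitarity.\<close>
definition finitary_matroid :: "'a set \<Rightarrow> 'a set set \<Rightarrow> bool" where
  "finitary_matroid E \<I> \<longleftrightarrow>
     (\<forall>I\<in>\<I>. I \<subseteq> E) \<and>
     {} \<in> \<I> \<and>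
     (\<forall>I\<in>\<I>. \<forall>J. J \<subseteq> I \<longrightarrow> J \<in> \<I>) \<and>
     (\<forall>I B. I \<in> \<I> \<and> \<not> maximal_in \<I> I \<and> maximal_in \<I> B \<longrightarrow>
            (\<exists>x\<in>B - I. insert x I \<in> \<I>)) \<and>
     (\<forall>I X. I \<in> \<I> \<and> I \<subseteq> X \<and> X \<subseteq> E \<longrightarrow>
            (\<exists>J. maximal_in {J'. J' \<in> \<I> \<and> I \<subseteq> J' \<and> J' \<subseteq> X} J)) \<and>
     (\<forall>X. X \<subseteq> E \<and> (\<forall>F. F \<subseteq> X \<and> finite F \<longrightarrow> F \<in> \<I>) \<longrightarrow> X \<in> \<I>)"

definition circuits :: "'a set \<Rightarrow> 'a set set \<Rightarrow> 'a set set" where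
  "circuits E \<I> = {C. C \<subseteq> E \<and> C \<notin> \<I> \<and> (\<forall>D. D \<subset> C \<longrightarrow> D \<in> \<I>)}"

text \<open>Independent sets of the contraction \<open>M/I\<close> (for \<open>I\<close> independent in \<open>M\<close>);
  its ground set is \<open>E - I\<close>.\<close>
definition contract :: "'a set set \<Rightarrow> 'a set \<Rightarrow> 'a set set" where
  "contract \<I> I = {J. J \<inter> I = {} \<and> J \<union> I \<in> \<I>}"

definition mrank :: "'a set set \<Rightarrow> 'a rel" where
  "mrank \<I> = |SOME B. maximal_in \<I> B|"

definition fcirc :: "'a set \<Rightarrow> 'a set set \<Rightarrow> 'a \<Rightarrow> 'a set \<Rightarrow> 'a set" where
  "fcirc E \<I> e B = (THE C. C \<in> circuits E \<I> \<and> C \<subseteq> insert e B)"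

definition exch_digraph :: "'a set \<Rightarrow> 'a set set \<Rightarrow> 'a set \<Rightarrow> 'a rel" where
  "exch_digraph E \<I> B = {(e, f). e \<in> E \<and> e \<notin> B \<and> f \<in> fcirc E \<I> e B - {e}}"

definition Db :: "'a set \<Rightarrow> 'a set set \<Rightarrow> 'a set set \<Rightarrow> 'a set \<Rightarrow> 'a set \<Rightarrow> 'a rel" where
  "Db E \<I>M \<I>N BM BN = exch_digraph E \<I>M BM \<union> (exch_digraph E \<I>N BN)\<inverse>"

definition dpath :: "'a rel \<Rightarrow> 'a list \<Rightarrow> bool" where
  "dpath R P \<longleftrightarrow> P \<noteq> [] \<and> distinct P \<and> successively (\<lambda>x y. (x, y) \<in> R) P"

definition b_path :: "'a set \<Rightarrow> 'a set set \<Rightarrow> 'a set set \<Rightarrow> 'a set \<Rightarrow> 'a set \<Rightarrow> 'a list \<Rightarrow> bool" where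
  "b_path E \<I>M \<I>N BM BN P \<longleftrightarrow> dpath (Db E \<I>M \<I>N BM BN) P \<and> hd P \<in> BN - BM"

definition ter :: "'a list \<Rightarrow> 'a" where
  "ter P = last P"

definition b_path_system ::
  "'a set \<Rightarrow> 'a set set \<Rightarrow> 'a set set \<Rightarrow> 'a set \<Rightarrow> 'a set \<Rightarrow> 'k rel \<Rightarrow> 'a list set \<Rightarrow> bool" where
  "b_path_system E \<I>M \<I>N BM BN \<kappa> \<P> \<longleftrightarrow>
     (\<forall>P\<in>\<P>. b_path E \<I>M \<I>N BM BN P) \<and>
     (\<forall>P\<in>\<P>. \<forall>Q\<in>\<P>. P \<noteq> Q \<longrightarrow> set P \<inter> set Q = {}) \<and>
     |\<P>| =o \<kappa>"

definition delta_system :: "'a set set \<Rightarrow> 'a set \<Rightarrow> bool" where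
  "delta_system \<D> K \<longleftrightarrow> (\<forall>C\<in>\<D>. \<forall>D\<in>\<D>. C \<noteq> D \<longrightarrow> C \<inter> D = K)"

definition popular ::
  "'a set \<Rightarrow> 'a set set \<Rightarrow> 'a set set \<Rightarrow> 'a set \<Rightarrow> 'a set \<Rightarrow> 'a set \<Rightarrow> 'k rel \<Rightarrow> 'a set \<Rightarrow> bool" where
  "popular E \<I>M \<I>N I BM BN \<kappa> K \<longleftrightarrow>
     K \<noteq> {} \<and> K \<subseteq> E \<and>
     (\<exists>\<P> \<D>. b_path_system E \<I>M \<I>N BM BN \<kappa> \<P> \<and>
            \<D> \<subseteq> circuits E \<I>M \<and> |\<D>| =o \<kappa> \<and> delta_system \<D> K \<and>
            (\<forall>C\<in>\<D>. C - K \<subseteq> I \<union> ter ` \<P>))"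

end

theory Submission
  imports Defs
begin


locale fmat =
  fixes E :: "'a set" and Ind :: "'a set set"
  assumes fm: "finitary_matroid E Ind"
begin

lemma fmD1: "(\<forall>I\<in>Ind. I \<subseteq> E)"
  using fm unfolding finitary_matroid_def by (elim conjE) assumption

lemma fmD2: "{} \<in> Ind"
  using fm unfolding finitary_matroid_def by (elim conjE) assumption

lemma fmD3: "(\<forall>I\<in>Ind. \<forall>J. J \<subseteq> I \<longrightarrow> J \<in> Ind)"
  using fm unfolding finitary_matroid_def by (elim conjE) assumption

lemma fmD4: "(\<forall>I B. I \<in> Ind \<and> \<not> maximal_in Ind I \<and> maximal_in Ind B \<longrightarrow>
            (\<exists>x\<in>B - I. insert x I \<in> Ind))"
  using fm unfolding finitary_matroid_def by (elim conjE) assumption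

lemma fmD5: "(\<forall>I X. I \<in> Ind \<and> I \<subseteq> X \<and> X \<subseteq> E \<longrightarrow>
            (\<exists>J. maximal_in {J'. J' \<in> Ind \<and> I \<subseteq> J' \<and> J' \<subseteq> X} J))"
  using fm unfolding finitary_matroid_def by (elim conjE) assumption

lemma fmD6: "(\<forall>X. X \<subseteq> E \<and> (\<forall>F. F \<subseteq> X \<and> finite F \<longrightarrow> F \<in> Ind) \<longrightarrow> X \<in> Ind)"
  using fm unfolding finitary_matroid_def by (elim conjE) assumption

lemma indep_E: "A \<in> Ind \<Longrightarrow> A \<subseteq> E"
  using fmD1 by blast

lemma indep_sub: "A \<in> Ind \<Longrightarrow> B \<subseteq> A \<Longrightarrow> B \<in> Ind"
  using fmD3 by blast

lemma empty_indep: "{} \<in> Ind"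
  using fmD2 by blast

lemma I3: "A \<in> Ind \<Longrightarrow> \<not> maximal_in Ind A \<Longrightarrow> maximal_in Ind B \<Longrightarrow> \<exists>x\<in>B - A. insert x A \<in> Ind"
  using fmD4 by blast

lemma IM: "A \<in> Ind \<Longrightarrow> A \<subseteq> X \<Longrightarrow> X \<subseteq> E \<Longrightarrow> \<exists>J. maximal_in {J'. J' \<in> Ind \<and> A \<subseteq> J' \<and> J' \<subseteq> X} J"
  using fmD5 by blast

lemma fin: "X \<subseteq> E \<Longrightarrow> X \<notin> Ind \<Longrightarrow> \<exists>F. F \<subseteq> X \<and> finite F \<and> F \<notin> Ind"
  using fmD6 by blast

lemma ext_base:
  assumes "A \<in> Ind" "A \<subseteq> Y" "Y \<subseteq> E" "maximal_in Ind P" "P \<subseteq> Y"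
  shows "\<exists>J. maximal_in Ind J \<and> A \<subseteq> J \<and> J \<subseteq> Y"
proof -
  obtain J where J: "maximal_in {J'. J' \<in> Ind \<and> A \<subseteq> J' \<and> J' \<subseteq> Y} J"
    using IM assms by blast
  have JI: "J \<in> Ind" "A \<subseteq> J" "J \<subseteq> Y" using J unfolding maximal_in_def by auto
  have "maximal_in Ind J"
  proof (rule ccontr)
    assume "\<not> maximal_in Ind J"
    then obtain z where z: "z \<in> P - J" "insert z J \<in> Ind" using I3 JI assms(4) by blast
    then have "insert z J \<in> {J'. J' \<in> Ind \<and> A \<subseteq> J' \<and> J' \<subseteq> Y}" using JI assms(5) by auto
    then have "insert z J = J" using J unfolding maximal_in_def by blast
    then show False using z by auto
  qed
  then show ?thesis using JI by blast
qed

lemma ext_base_E: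
  assumes "A \<in> Ind"
  shows "\<exists>J. maximal_in Ind J \<and> A \<subseteq> J"
proof -
  obtain J where J: "maximal_in {J'. J' \<in> Ind \<and> A \<subseteq> J' \<and> J' \<subseteq> E} J"
    using IM assms indep_E by blast
  have "J \<in> Ind" "A \<subseteq> J" using J unfolding maximal_in_def by auto
  moreover have "\<forall>B'\<in>Ind. J \<subseteq> B' \<longrightarrow> B' = J"
  proof (intro ballI impI)
    fix B' assume "B' \<in> Ind" "J \<subseteq> B'"
    then show "B' = J" using J indep_E[of B'] \<open>A \<subseteq> J\<close> unfolding maximal_in_def by blast
  qed
  ultimately show ?thesis unfolding maximal_in_def by blast
qed

lemma L3:
  assumes "finite S"
  shows "maximal_in Ind P \<Longrightarrow> maximal_in Ind Q \<Longrightarrow> S \<subseteq> Q - P \<Longrightarrow> finite (P - Q)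
     \<Longrightarrow> card S \<le> card (P - Q)"
  using assms
proof (induction S arbitrary: Q rule: finite_induct)
  case empty
  then show ?case by simp
next
  case (insert y S)
  have QI: "Q \<in> Ind" "P \<in> Ind" using insert.prems unfolding maximal_in_def by auto
  have yQ: "y \<in> Q" "y \<notin> P" using insert.prems by auto
  have "Q - {y} \<in> Ind" using indep_sub QI by blast
  moreover have "\<not> maximal_in Ind (Q - {y})"
    using QI yQ unfolding maximal_in_def by blast
  ultimately obtain x where x: "x \<in> P - (Q - {y})" "insert x (Q - {y}) \<in> Ind"
    using I3 insert.prems(1) by blast
  have xPQ: "x \<in> P - Q" using x yQ by auto
  obtain J where J: "maximal_in Ind J" "insert x (Q - {y}) \<subseteq> J" "J \<subseteq> insert x (Q - {y}) \<union> P"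
  proof -
    have "insert x (Q - {y}) \<union> P \<subseteq> E" using indep_E[OF x(2)] indep_E[OF QI(2)] by blast
    then show ?thesis using ext_base[OF x(2), of "insert x (Q - {y}) \<union> P" P] insert.prems(1) that by blast
  qed
  have "S \<subseteq> J - P" using insert J by auto
  moreover have "P - J \<subseteq> (P - Q) - {x}" using J yQ by auto
  hence fPJ: "finite (P - J)" using insert.prems(4) finite_subset by blast
  ultimately have "card S \<le> card (P - J)" using insert.IH[OF insert.prems(1) J(1)] by blast
  also have "\<dots> \<le> card ((P - Q) - {x})" using card_mono \<open>P - J \<subseteq> (P - Q) - {x}\<close> insert.prems(4) by blast
  also have "\<dots> = card (P - Q) - 1" using xPQ insert.prems(4) by simp
  finally have "card S \<le> card (P - Q) - 1" .
  moreover have "P - Q \<noteq> {}" using xPQ by blast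
  hence "card (P - Q) \<ge> 1" using insert.prems(4) by (simp add: Suc_le_eq card_gt_0_iff)
  moreover have "card (insert y S) = card S + 1" using insert.hyps by simp
  ultimately show ?case by linarith
qed

lemma augment:
  assumes A: "A \<in> Ind" "finite A" and B: "B \<in> Ind" "finite B" and c: "card A < card B"
  shows "\<exists>x\<in>B - A. insert x A \<in> Ind"
proof (rule ccontr)
  assume no: "\<not> ?thesis"
  obtain Bh where Bh: "maximal_in Ind Bh" "B \<subseteq> Bh" using ext_base_E B by blast
  have "Bh \<subseteq> E" using Bh indep_E unfolding maximal_in_def by auto
  then obtain Ah where Ah: "maximal_in Ind Ah" "A \<subseteq> Ah" "Ah \<subseteq> A \<union> Bh"
    using ext_base[OF A(1), of "A \<union> Bh" Bh] Bh indep_E A by auto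
  have "Ah \<inter> (B - A) = {}"
  proof (rule ccontr)
    assume "Ah \<inter> (B - A) \<noteq> {}"
    then obtain x where "x \<in> Ah" "x \<in> B - A" by blast
    then have "insert x A \<in> Ind" using Ah indep_sub unfolding maximal_in_def by (meson insert_subset)
    then show False using no \<open>x \<in> B - A\<close> by blast
  qed
  hence "B - A \<subseteq> Bh - Ah" using Bh by auto
  moreover have "Ah - Bh \<subseteq> A - B" using Ah Bh by auto
  hence f: "finite (Ah - Bh)" using A finite_subset by blast
  ultimately have "card (B - A) \<le> card (Ah - Bh)" using L3[of "B - A" Ah Bh] Ah Bh B by blast
  also have "\<dots> \<le> card (A - B)" using card_mono \<open>Ah - Bh \<subseteq> A - B\<close> A by blast
  finally have "card (B - A) \<le> card (A - B)" .
  moreover have "card (B - A) = card B - card (B \<inter> A)" using B(2) by (intro card_Diff_subset_Int) simp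
  moreover have "card (A - B) = card A - card (B \<inter> A)" using A(2) card_Diff_subset_Int[of A B] by (simp add: Int_commute)
  moreover have "card (B \<inter> A) \<le> card A" using A(2) by (intro card_mono) auto
  ultimately show False using c by linarith
qed


lemma circuitD: "C \<in> circuits E Ind \<Longrightarrow> C \<subseteq> E \<and> C \<notin> Ind \<and> (\<forall>D. D \<subset> C \<longrightarrow> D \<in> Ind)"
  unfolding circuits_def by blast

lemma circuit_finite: assumes "C \<in> circuits E Ind" shows "finite C"
proof -
  have C: "C \<subseteq> E" "C \<notin> Ind" "\<forall>D. D \<subset> C \<longrightarrow> D \<in> Ind" using circuitD[OF assms] by auto
  obtain F where F: "F \<subseteq> C" "finite F" "F \<notin> Ind" using fin C by blast
  have "F = C" using F C by blast
  then show ?thesis using F by simp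
qed

lemma dep_circuit:
  assumes "X \<subseteq> E" "X \<notin> Ind" shows "\<exists>C\<in>circuits E Ind. C \<subseteq> X"
proof -
  obtain F where F: "F \<subseteq> X" "finite F" "F \<notin> Ind" using fin assms by blast
  define P where "P = (\<lambda>n. \<exists>D. D \<subseteq> F \<and> D \<notin> Ind \<and> card D = n)"
  have "P (card F)" unfolding P_def using F by blast
  then obtain n where n: "P n" "\<And>m. m < n \<Longrightarrow> \<not> P m"
    using ex_least_nat_le[of P "card F"] by (metis not_less_Least LeastI)
  then obtain D where D: "D \<subseteq> F" "D \<notin> Ind" "card D = n" unfolding P_def by blast
  have fD: "finite D" using D F finite_subset by blast
  have "\<forall>D'. D' \<subset> D \<longrightarrow> D' \<in> Ind"
  proof (intro allI impI)
    fix D' assume "D' \<subset> D"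
    then have "card D' < card D" using fD psubset_card_mono by blast
    moreover have "D' \<subseteq> F" using \<open>D' \<subset> D\<close> D by blast
    ultimately show "D' \<in> Ind" using n(2) D unfolding P_def by blast
  qed
  then have "D \<in> circuits E Ind" unfolding circuits_def using D F assms by blast
  then show ?thesis using D F by blast
qed

definition mi :: "'a set \<Rightarrow> 'a set \<Rightarrow> bool" where
  "mi Y A \<longleftrightarrow> A \<in> Ind \<and> A \<subseteq> Y \<and> (\<forall>B. B \<in> Ind \<and> A \<subseteq> B \<and> B \<subseteq> Y \<longrightarrow> B = A)"

lemma miD: "mi Y A \<Longrightarrow> A \<in> Ind" "mi Y A \<Longrightarrow> A \<subseteq> Y"
  "mi Y A \<Longrightarrow> B \<in> Ind \<Longrightarrow> A \<subseteq> B \<Longrightarrow> B \<subseteq> Y \<Longrightarrow> B = A"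
  unfolding mi_def by blast+

lemma exists_mi: assumes "Y \<subseteq> E" "A0 \<in> Ind" "A0 \<subseteq> Y" shows "\<exists>A. mi Y A \<and> A0 \<subseteq> A"
proof -
  obtain J where J: "maximal_in {J'. J' \<in> Ind \<and> A0 \<subseteq> J' \<and> J' \<subseteq> Y} J" using IM assms by blast
  then have J1: "J \<in> Ind" "A0 \<subseteq> J" "J \<subseteq> Y"
    and J2: "\<And>B. B \<in> Ind \<Longrightarrow> A0 \<subseteq> B \<Longrightarrow> B \<subseteq> Y \<Longrightarrow> J \<subseteq> B \<Longrightarrow> B = J"
    unfolding maximal_in_def by auto
  have "mi Y J" unfolding mi_def
  proof (intro conjI allI impI)
    fix B assume "B \<in> Ind \<and> J \<subseteq> B \<and> B \<subseteq> Y"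
    then show "B = J" using J2 J1 by blast
  qed (use J1 in auto)
  then show ?thesis using J1 by blast
qed

lemma mi_card: assumes "finite Y" "mi Y A" "mi Y A'" shows "card A \<le> card A'"
proof (rule ccontr)
  assume "\<not> card A \<le> card A'"
  then have c: "card A' < card A" by simp
  have f: "finite A" "finite A'" using assms(1) miD(2)[OF assms(2)] miD(2)[OF assms(3)] finite_subset by blast+
  obtain x where x: "x \<in> A - A'" "insert x A' \<in> Ind" using augment[OF miD(1)[OF assms(3)] f(2) miD(1)[OF assms(2)] f(1) c] by blast
  then have "insert x A' = A'" using miD(3)[OF assms(3) x(2)] miD(2)[OF assms(2)] miD(2)[OF assms(3)] by blast
  then show False using x by blast
qed

lemma claim1:
  assumes Y: "finite Y" "Y \<subseteq> E" and A: "mi Y A" and C: "C \<in> circuits E Ind" "x \<in> C" "C \<subseteq> insert x Y"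
    and xY: "x \<notin> Y"
  shows "insert x A \<notin> Ind"
proof
  assume xA: "insert x A \<in> Ind"
  have Cc: "C \<notin> Ind" "\<forall>D. D \<subset> C \<longrightarrow> D \<in> Ind" using circuitD[OF C(1)] by auto
  have "C - {x} \<in> Ind" using Cc C(2) by blast
  moreover have "C - {x} \<subseteq> Y" using C by blast
  ultimately obtain A0 where A0: "mi Y A0" "C - {x} \<subseteq> A0" using exists_mi[OF Y(2)] by blast
  have fA: "finite A" "finite A0" using miD(2)[OF A] miD(2)[OF A0(1)] Y(1) finite_subset by blast+
  have "card A0 \<le> card A" using mi_card[OF Y(1) A0(1) A] .
  moreover have "x \<notin> A" using miD(2)[OF A] xY by blast
  ultimately have "card A0 < card (insert x A)" using fA by simp
  then obtain z where z: "z \<in> insert x A - A0" "insert z A0 \<in> Ind"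
    using augment[OF miD(1)[OF A0(1)] fA(2) xA] fA by auto
  show False
  proof (cases "z = x")
    case True
    then have "C \<subseteq> insert z A0" using A0 by blast
    then show False using z(2) indep_sub Cc(1) by blast
  next
    case False
    then have "z \<in> A" "z \<notin> A0" using z by auto
    then have "insert z A0 \<subseteq> Y" using miD(2)[OF A] miD(2)[OF A0(1)] by blast
    then have "insert z A0 = A0" using miD(3)[OF A0(1) z(2)] by blast
    then show False using \<open>z \<notin> A0\<close> by blast
  qed
qed

lemma mi_extend: assumes "mi Y A" "x \<notin> Y" "insert x A \<notin> Ind" shows "mi (insert x Y) A"
  unfolding mi_def
proof (intro conjI allI impI)
  show "A \<in> Ind" "A \<subseteq> insert x Y" using miD[OF assms(1)] by auto
  fix B assume B: "B \<in> Ind \<and> A \<subseteq> B \<and> B \<subseteq> insert x Y"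
  show "B = A"
  proof (cases "x \<in> B")
    case True
    then have "insert x A \<subseteq> B" using B by blast
    then show ?thesis using B assms(3) indep_sub by blast
  next
    case False
    then have "B \<subseteq> Y" using B by blast
    then show ?thesis using B miD(3)[OF assms(1)] by blast
  qed
qed

lemma claim2: assumes "mi Y A" "insert f A \<notin> Ind" "insert f Y \<subseteq> E"
  shows "\<exists>C\<in>circuits E Ind. f \<in> C \<and> C \<subseteq> insert f Y"
proof -
  have "insert f A \<subseteq> E" using assms(3) miD(2)[OF assms(1)] by blast
  then obtain C where C: "C \<in> circuits E Ind" "C \<subseteq> insert f A" using dep_circuit assms(2) by blast
  have "f \<in> C"
  proof (rule ccontr)
    assume "f \<notin> C"
    then have "C \<subseteq> A" using C by blast
    then have "C \<in> Ind" using indep_sub miD(1)[OF assms(1)] by blast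
    then show False using circuitD[OF C(1)] by blast
  qed
  then show ?thesis using C miD(2)[OF assms(1)] by blast
qed

lemma strong_elim1:
  assumes C1: "C1 \<in> circuits E Ind" and C2: "C2 \<in> circuits E Ind" and e: "e \<in> C1" "e \<in> C2"
    and f: "f \<in> C1" "f \<notin> C2"
  shows "\<exists>C\<in>circuits E Ind. f \<in> C \<and> C \<subseteq> (C1 \<union> C2) - {e}"
proof -
  define Y where "Y = (C1 \<union> C2) - {e, f}"
  have fY: "finite Y" unfolding Y_def using circuit_finite C1 C2 by blast
  have YE: "C1 \<union> C2 \<subseteq> E" using circuitD C1 C2 by blast
  hence YE': "Y \<subseteq> E" unfolding Y_def by blast
  obtain A where A: "mi Y A" using exists_mi[OF YE' empty_indep] by blast
  have ef: "e \<noteq> f" using e f by blast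
  have s1: "C2 \<subseteq> insert e Y" using f(2) unfolding Y_def by blast
  have s2: "e \<notin> Y" unfolding Y_def by blast
  have "insert e A \<notin> Ind"
    using claim1[OF fY YE' A C2 e(2) s1 s2] .
  then have A': "mi (insert e Y) A" using mi_extend[OF A s2] by blast
  have s3: "finite (insert e Y)" using fY by simp
  have s4: "insert e Y \<subseteq> E" using YE' YE e by blast
  have s5: "C1 \<subseteq> insert f (insert e Y)" unfolding Y_def by blast
  have s6: "f \<notin> insert e Y" using ef unfolding Y_def by blast
  have "insert f A \<notin> Ind"
    using claim1[OF s3 s4 A' C1 f(1) s5 s6] .
  moreover have "insert f Y \<subseteq> E" using YE' YE f by blast
  ultimately obtain C where "C \<in> circuits E Ind" "f \<in> C" "C \<subseteq> insert f Y"
    using claim2[OF A] by blast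
  moreover have "insert f Y \<subseteq> (C1 \<union> C2) - {e}" using ef f unfolding Y_def by blast
  ultimately show ?thesis by blast
qed

lemma strong_elim:
  assumes C1: "C1 \<in> circuits E Ind" and C2: "C2 \<in> circuits E Ind" and e: "e \<in> C1 \<inter> C2"
    and f: "f \<in> (C1 - C2) \<union> (C2 - C1)"
  shows "\<exists>C\<in>circuits E Ind. f \<in> C \<and> C \<subseteq> (C1 \<union> C2) - {e}"
proof (cases "f \<in> C1")
  case True
  then show ?thesis using strong_elim1[OF C1 C2] e f by blast
next
  case False
  then obtain C where "C\<in>circuits E Ind" "f \<in> C" "C \<subseteq> (C2 \<union> C1) - {e}"
    using strong_elim1[OF C2 C1] e f by blast
  then show ?thesis by blast
qed

end


lemma fin_less: "finite A \<Longrightarrow> infinite K \<Longrightarrow> |A| <o |K|"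
proof -
  assume a: "finite A" "infinite K"
  have "|A| <o natLeq" using a(1) finite_iff_ordLess_natLeq[of A] by simp
  moreover have "natLeq \<le>o |K|" using a(2) infinite_iff_natLeq_ordLeq[of K] by simp
  ultimately show ?thesis by (rule ordLess_ordLeq_trans)
qed

lemma leq_not_iso_less: "|A| \<le>o |K| \<Longrightarrow> \<not> |A| =o |K| \<Longrightarrow> |A| <o |K|"
  using ordLeq_iff_ordLess_or_ordIso[of "|A|" "|K|"] by simp

lemma finite_UN_less:
  assumes "finite Y" "infinite K"
  shows "(\<forall>y\<in>Y. |F y| <o |K| ) \<Longrightarrow> |\<Union>y\<in>Y. F y| <o |K|"
  using assms(1)
proof (induction Y rule: finite_induct)
  case empty
  then show ?case using fin_less[OF finite.emptyI assms(2)] by simp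
next
  case (insert y Y)
  then have "|F y| <o |K|" "|\<Union>y\<in>Y. F y| <o |K|" by auto
  then have "|F y \<union> (\<Union>y\<in>Y. F y)| <o |K|" using card_of_Un_ordLess_infinite assms(2) by blast
  then show ?case by simp
qed

lemma pigeon:
  assumes K: "infinite K" and X: "|X| =o |K|" and g: "g ` X \<subseteq> Y" and Y: "finite Y"
  shows "\<exists>y. |{x\<in>X. g x = y}| =o |K|"
proof (rule ccontr)
  assume no: "\<not> ?thesis"
  have "\<forall>y\<in>Y. |{x\<in>X. g x = y}| <o |K|"
  proof
    fix y
    have "|{x\<in>X. g x = y}| \<le>o |X|" by (rule card_of_mono1) blast
    then have "|{x\<in>X. g x = y}| \<le>o |K|" using X ordLeq_ordIso_trans by blast
    then show "|{x\<in>X. g x = y}| <o |K|" using no leq_not_iso_less by blast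
  qed
  then have "|\<Union>y\<in>Y. {x\<in>X. g x = y}| <o |K|" using finite_UN_less[OF Y K, of "\<lambda>y. {x\<in>X. g x = y}"] by blast
  moreover have "(\<Union>y\<in>Y. {x\<in>X. g x = y}) = X" using g by blast
  ultimately have "|X| <o |K|" by simp
  then show False using X not_ordLess_ordIso by blast
qed

lemma diff_finite:
  assumes K: "infinite K" and D: "|D| =o |K|" and f: "finite (D - D')"
  shows "|D \<inter> D'| =o |K|"
proof (rule ccontr)
  assume no: "\<not> ?thesis"
  have "|D \<inter> D'| \<le>o |D|" by (rule card_of_mono1) blast
  then have "|D \<inter> D'| \<le>o |K|" using D ordLeq_ordIso_trans by blast
  then have "|D \<inter> D'| <o |K|" using no leq_not_iso_less by blast
  moreover have "|D - D'| <o |K|" using fin_less f K by blast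
  ultimately have "|(D \<inter> D') \<union> (D - D')| <o |K|" using card_of_Un_ordLess_infinite K by blast
  moreover have "(D \<inter> D') \<union> (D - D') = D" by blast
  ultimately have "|D| <o |K|" by simp
  then show False using D not_ordLess_ordIso by blast
qed

lemma UN_finite_less:
  assumes K: "infinite K" and S: "|S| <o |K|" and R: "\<forall>s\<in>S. finite (R s)"
  shows "|\<Union>s\<in>S. R s| <o |K|"
proof (cases "finite S")
  case True
  then show ?thesis using R fin_less K by blast
next
  case False
  have "\<forall>s\<in>S. |R s| \<le>o |S|" using R fin_less[OF _ False] ordLess_imp_ordLeq by blast
  moreover have "|S| \<le>o |S|" using card_of_refl ordIso_iff_ordLeq by blast
  ultimately have "|\<Union>s\<in>S. R s| \<le>o |S|" using card_of_UNION_ordLeq_infinite[OF False] by blast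
  then show ?thesis using S ordLeq_ordLess_trans by blast
qed

lemma sub_exact:
  assumes "|K| \<le>o |S|" shows "\<exists>S'\<subseteq>S. |S'| =o |K|"
proof -
  obtain f where f: "inj_on f K" "f ` K \<subseteq> S" using assms card_of_ordLeq[of K S] by blast
  then have "bij_betw f K (f ` K)" by (simp add: inj_on_imp_bij_betw)
  then have "|K| =o |f ` K|" using card_of_ordIso by blast
  then show ?thesis using f ordIso_symmetric by blast
qed

lemma zorn_select:
  assumes K: "infinite K"
    and R: "\<forall>a\<in>A. R a \<noteq> {} \<and> finite (R a)"
    and ext: "\<And>U. |U| <o |K| \<Longrightarrow> \<exists>a\<in>A. R a \<inter> U = {}"
  shows "\<exists>S\<subseteq>A. |S| =o |K| \<and> (\<forall>x\<in>S. \<forall>y\<in>S. x \<noteq> y \<longrightarrow> R x \<inter> R y = {})"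
proof -
  define F where "F = {S. S \<subseteq> A \<and> (\<forall>x\<in>S. \<forall>y\<in>S. x \<noteq> y \<longrightarrow> R x \<inter> R y = {})}"
  have "\<forall>C\<in>chains F. \<Union>C \<in> F"
  proof
    fix C assume C: "C \<in> chains F"
    have sub: "\<Union>C \<subseteq> A" using C unfolding chains_def F_def by blast
    have "\<forall>x\<in>\<Union>C. \<forall>y\<in>\<Union>C. x \<noteq> y \<longrightarrow> R x \<inter> R y = {}"
    proof (intro ballI impI)
      fix x y assume xy: "x \<in> \<Union>C" "y \<in> \<Union>C" "x \<noteq> y"
      then obtain S1 S2 where S: "S1 \<in> C" "S2 \<in> C" "x \<in> S1" "y \<in> S2" by blast
      have "S1 \<subseteq> S2 \<or> S2 \<subseteq> S1" using C S unfolding chains_def chain_subset_def by blast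
      then obtain S3 where "S3 \<in> C" "x \<in> S3" "y \<in> S3" using S by blast
      then show "R x \<inter> R y = {}" using C xy(3) unfolding chains_def F_def by blast
    qed
    then show "\<Union>C \<in> F" using sub unfolding F_def by blast
  qed
  then obtain M where M: "M \<in> F" "\<forall>X\<in>F. M \<subseteq> X \<longrightarrow> X = M" using Zorn_Lemma by blast
  have MA: "M \<subseteq> A" and Md: "\<forall>x\<in>M. \<forall>y\<in>M. x \<noteq> y \<longrightarrow> R x \<inter> R y = {}" using M(1) unfolding F_def by auto
  have "\<not> |M| <o |K|"
  proof
    assume "|M| <o |K|"
    moreover have "\<forall>s\<in>M. finite (R s)" using R MA by blast
    ultimately have "|\<Union>s\<in>M. R s| <o |K|" by (rule UN_finite_less[OF K])
    then obtain a where a: "a \<in> A" "R a \<inter> (\<Union>s\<in>M. R s) = {}" using ext by blast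
    have aM: "a \<notin> M" using a R by blast
    have "insert a M \<in> F" unfolding F_def using a MA Md by blast
    then have "insert a M = M" using M(2) by blast
    then show False using aM by blast
  qed
  then have "|K| \<le>o |M|" using not_ordLeq_iff_ordLess[OF card_of_Well_order card_of_Well_order, of K M] by simp
  then obtain S where "S \<subseteq> M" "|S| =o |K|" using sub_exact by blast
  then show ?thesis using MA Md by (intro exI[of _ S]) blast
qed



lemma subsingleton_finite: "(\<And>a b. a \<in> A \<Longrightarrow> b \<in> A \<Longrightarrow> a = b) \<Longrightarrow> finite A"
proof (cases "A = {}")
  case False
  then obtain a where "a \<in> A" by blast
  moreover assume "\<And>a b. a \<in> A \<Longrightarrow> b \<in> A \<Longrightarrow> a = b"
  ultimately have "A = {a}" by blast
  then show ?thesis by simp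
qed simp

lemma bps_D:
  assumes "b_path_system E IM IN BM BN k P"
  shows "\<And>p. p \<in> P \<Longrightarrow> b_path E IM IN BM BN p"
    and "\<And>p. p \<in> P \<Longrightarrow> p \<noteq> []"
    and "\<And>p. p \<in> P \<Longrightarrow> ter p \<in> set p"
    and "\<And>p q. p \<in> P \<Longrightarrow> q \<in> P \<Longrightarrow> p \<noteq> q \<Longrightarrow> set p \<inter> set q = {}"
    and "|P| =o k"
  using assms unfolding b_path_system_def b_path_def dpath_def ter_def by auto

lemma bps_ter_inj:
  assumes "b_path_system E IM IN BM BN k P" "p \<in> P" "q \<in> P" "ter p = ter q"
  shows "p = q"
proof (rule ccontr)
  assume "p \<noteq> q"
  then have "set p \<inter> set q = {}" using bps_D(4)[OF assms(1)] assms by blast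
  moreover have "ter p \<in> set p" "ter q \<in> set q" using bps_D(3)[OF assms(1)] assms(2,3) by auto
  ultimately show False using assms(4) by (metis disjoint_iff)
qed

lemma inf_of_iso: "infinite K \<Longrightarrow> |D| =o |K| \<Longrightarrow> infinite D"
  using card_of_ordIso_finite by blast

context fmat
begin

lemma pop_unpack:
  assumes K: "infinite K" and pop: "popular E Ind IN I BM BN |K| K0"
  obtains P D where "b_path_system E Ind IN BM BN |K| P" "D \<subseteq> circuits E Ind" "|D| =o |K|"
    "delta_system D K0" "\<forall>C\<in>D. C - K0 \<subseteq> I \<union> ter ` P" "K0 \<noteq> {}" "K0 \<subseteq> E"
    "\<forall>C\<in>D. K0 \<subseteq> C" "finite K0"
    "\<forall>C\<in>D. \<forall>C'\<in>D. C \<noteq> C' \<longrightarrow> (C - K0) \<inter> (C' - K0) = {}"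
proof -
  obtain P D where PD: "b_path_system E Ind IN BM BN |K| P" "D \<subseteq> circuits E Ind" "|D| =o |K|"
    "delta_system D K0" "\<forall>C\<in>D. C - K0 \<subseteq> I \<union> ter ` P" and K0: "K0 \<noteq> {}" "K0 \<subseteq> E"
    using pop unfolding popular_def by blast
  have infD: "infinite D" using inf_of_iso[OF K PD(3)] .
  have sub: "\<forall>C\<in>D. K0 \<subseteq> C"
  proof
    fix C assume C: "C \<in> D"
    have "infinite (D - {C})" using infD by simp
    then have "D - {C} \<noteq> {}" by (rule infinite_imp_nonempty)
    then obtain C' where "C' \<in> D" "C' \<noteq> C" by blast
    then have "C \<inter> C' = K0" using PD(4) C unfolding delta_system_def by blast
    then show "K0 \<subseteq> C" by blast
  qed
  have "D \<noteq> {}" using infD by (rule infinite_imp_nonempty)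
  then obtain C where C: "C \<in> D" by blast
  have "finite C" using circuit_finite C PD(2) by blast
  then have fK: "finite K0" using sub C finite_subset by blast
  have "\<forall>C\<in>D. \<forall>C'\<in>D. C \<noteq> C' \<longrightarrow> (C - K0) \<inter> (C' - K0) = {}"
    using PD(4) unfolding delta_system_def by blast
  then show ?thesis using that PD K0 sub fK by blast
qed

lemma FL:
  assumes K: "infinite K" and X: "|X| =o |K|" and Z: "finite Z" and fZ: "f \<in> Z"
    and G: "\<And>x. x \<in> X \<Longrightarrow> G x \<in> circuits E Ind \<and> f \<in> G x \<and> G x \<subseteq> (Z - {e}) \<union> W x \<and> W x \<inter> Z = {}
               \<and> G x \<inter> W x \<noteq> {} \<and> W x \<subseteq> I \<union> ter ` P"
    and Wd: "\<And>x y. x \<in> X \<Longrightarrow> y \<in> X \<Longrightarrow> x \<noteq> y \<Longrightarrow> W x \<inter> W y = {}"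
    and P: "b_path_system E Ind IN BM BN |K| P"
  shows "\<exists>T. popular E Ind IN I BM BN |K| T \<and> f \<in> T \<and> T \<subseteq> Z - {e}"
proof -
  have "(\<lambda>x. G x \<inter> Z) ` X \<subseteq> Pow Z" by blast
  then obtain T where T: "|{x\<in>X. G x \<inter> Z = T}| =o |K|"
    using pigeon[OF K X _ ] Z by (metis finite_Pow_iff)
  define X' where "X' = {x\<in>X. G x \<inter> Z = T}"
  have X'X: "X' \<subseteq> X" unfolding X'_def by blast
  have X'T: "\<And>x. x \<in> X' \<Longrightarrow> G x \<inter> Z = T" unfolding X'_def by blast
  have X'K: "|X'| =o |K|" using T unfolding X'_def .
  have "infinite X'" using inf_of_iso[OF K X'K] .
  then have "X' \<noteq> {}" by (rule infinite_imp_nonempty)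
  then obtain x0 where x0: "x0 \<in> X'" by blast
  have Gx0: "G x0 \<in> circuits E Ind" "f \<in> G x0" "G x0 \<subseteq> (Z - {e}) \<union> W x0" "W x0 \<inter> Z = {}"
    using G x0 X'X by blast+
  have fT: "f \<in> T" using X'T[OF x0] Gx0 fZ by blast
  have TZ: "T \<subseteq> Z - {e}" using X'T[OF x0] Gx0 by blast
  have TE: "T \<subseteq> E" using X'T[OF x0] circuitD[OF Gx0(1)] by blast
  have inj: "inj_on G X'"
  proof (rule inj_onI)
    fix x y assume xy: "x \<in> X'" "y \<in> X'" "G x = G y"
    show "x = y"
    proof (rule ccontr)
      assume ne: "x \<noteq> y"
      obtain w where w: "w \<in> G x" "w \<in> W x" using G xy X'X by blast
      have "W x \<inter> Z = {}" "G y \<subseteq> (Z - {e}) \<union> W y" using G xy X'X by blast+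
      then have "w \<in> W y" using w xy(3) by blast
      then show False using Wd[of x y] w xy X'X ne by blast
    qed
  qed
  then have "bij_betw G X' (G ` X')" by (simp add: inj_on_imp_bij_betw)
  then have "|X'| =o |G ` X'|" using card_of_ordIso by blast
  then have DK: "|G ` X'| =o |K|" using X'K ordIso_symmetric ordIso_transitive by blast
  have Dc: "G ` X' \<subseteq> circuits E Ind" using G X'X by blast
  have delta: "delta_system (G ` X') T"
    unfolding delta_system_def
  proof (intro ballI impI)
    fix C D assume CD: "C \<in> G ` X'" "D \<in> G ` X'" "C \<noteq> D"
    then obtain x y where xy: "x \<in> X'" "y \<in> X'" "C = G x" "D = G y" by blast
    then have ne: "x \<noteq> y" using CD by blast
    have "G x \<inter> G y \<subseteq> T"
    proof
      fix z assume z: "z \<in> G x \<inter> G y"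
      show "z \<in> T"
      proof (cases "z \<in> Z")
        case True then show ?thesis using X'T[OF xy(1)] z by blast
      next
        case False
        then have "z \<in> W x" "z \<in> W y" using G xy X'X z by blast+
        then show ?thesis using Wd[of x y] xy X'X ne by blast
      qed
    qed
    moreover have "T \<subseteq> G x \<inter> G y" using X'T xy by blast
    ultimately show "C \<inter> D = T" using xy by blast
  qed
  have pet: "\<forall>C\<in>G ` X'. C - T \<subseteq> I \<union> ter ` P"
  proof
    fix C assume "C \<in> G ` X'"
    then obtain x where x: "x \<in> X'" "C = G x" by blast
    have "C - T \<subseteq> W x" using X'T[OF x(1)] G[of x] x X'X by blast
    then show "C - T \<subseteq> I \<union> ter ` P" using G[of x] x X'X by blast
  qed
  have "popular E Ind IN I BM BN |K| T"
    unfolding popular_def using fT TE P Dc DK delta pet by blast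
  then show ?thesis using fT TZ by blast
qed

end


context fmat
begin

lemma petal_avoid_finite:
  assumes Wd: "\<forall>C\<in>D. \<forall>C'\<in>D. C \<noteq> C' \<longrightarrow> W C \<inter> W C' = {}" and Z: "finite Z"
  shows "finite {C\<in>D. W C \<inter> Z \<noteq> {}}"
proof -
  have "{C\<in>D. W C \<inter> Z \<noteq> {}} \<subseteq> (\<Union>z\<in>Z. {C\<in>D. z \<in> W C})" by blast
  moreover have "\<forall>z\<in>Z. finite {C\<in>D. z \<in> W C}"
  proof
    fix z show "finite {C\<in>D. z \<in> W C}"
      by (rule subsingleton_finite) (use Wd in blast)
  qed
  ultimately show ?thesis using Z by (meson finite_UN_I finite_subset)
qed

lemma caseB:
  assumes K: "infinite K" and pop: "popular E Ind IN I BM BN |K| K0"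
    and C1: "C1 \<in> circuits E Ind" and e: "e \<in> K0 \<inter> C1" and f: "f \<in> (K0 - C1) \<union> (C1 - K0)"
  shows "\<exists>G. (G \<in> circuits E Ind \<or> popular E Ind IN I BM BN |K| G) \<and> f \<in> G \<and> G \<subseteq> (K0 \<union> C1) - {e}"
proof -
  obtain P D where PD: "b_path_system E Ind IN BM BN |K| P" "D \<subseteq> circuits E Ind" "|D| =o |K|"
    "\<forall>C\<in>D. C - K0 \<subseteq> I \<union> ter ` P" "\<forall>C\<in>D. K0 \<subseteq> C" "finite K0"
    "\<forall>C\<in>D. \<forall>C'\<in>D. C \<noteq> C' \<longrightarrow> (C - K0) \<inter> (C' - K0) = {}"
    using pop_unpack[OF K pop] by metis
  define D' where "D' = {C. (C - K0) \<inter> C1 = {}}"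
  have fC1: "finite C1" using circuit_finite C1 .
  have "finite {C\<in>D. (C - K0) \<inter> C1 \<noteq> {}}"
    using petal_avoid_finite[OF PD(7) fC1] .
  moreover have "D - D' = {C\<in>D. (C - K0) \<inter> C1 \<noteq> {}}" unfolding D'_def by blast
  ultimately have "finite (D - D')" by simp
  then have DD: "|D \<inter> D'| =o |K|" using diff_finite[OF K PD(3)] by blast
  define G where "G = (\<lambda>C. SOME G. G \<in> circuits E Ind \<and> f \<in> G \<and> G \<subseteq> (C \<union> C1) - {e})"
  have Gp: "G C \<in> circuits E Ind \<and> f \<in> G C \<and> G C \<subseteq> (C \<union> C1) - {e}" if C: "C \<in> D \<inter> D'" for C
  proof -
    have CC: "C \<in> circuits E Ind" using C PD(2) by blast
    have eC: "e \<in> C \<inter> C1" using e PD(5) C by blast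
    have "f \<in> (C - C1) \<union> (C1 - C)"
    proof (cases "f \<in> K0")
      case True
      then show ?thesis using f PD(5) C by blast
    next
      case False
      then have "f \<in> C1" using f by blast
      then have "f \<notin> C" using C False unfolding D'_def by blast
      then show ?thesis using \<open>f \<in> C1\<close> by blast
    qed
    then have "\<exists>G. G \<in> circuits E Ind \<and> f \<in> G \<and> G \<subseteq> (C \<union> C1) - {e}"
      using strong_elim[OF CC C1 eC] by blast
    then show ?thesis unfolding G_def by (rule someI_ex)
  qed
  show ?thesis
  proof (cases "\<exists>C\<in>D \<inter> D'. G C \<inter> (C - K0) = {}")
    case True
    then obtain C where C: "C \<in> D \<inter> D'" "G C \<inter> (C - K0) = {}" by blast
    then have "G C \<subseteq> (K0 \<union> C1) - {e}" using Gp[OF C(1)] by blast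
    then show ?thesis using Gp[OF C(1)] by blast
  next
    case False
    have fZ: "f \<in> K0 \<union> C1" using f by blast
    have "\<exists>T. popular E Ind IN I BM BN |K| T \<and> f \<in> T \<and> T \<subseteq> (K0 \<union> C1) - {e}"
    proof (rule FL[OF K DD _ fZ _ _ PD(1), where W="\<lambda>C. C - K0" and G=G])
      show "finite (K0 \<union> C1)" using PD(6) fC1 by simp
    next
      fix C assume C: "C \<in> D \<inter> D'"
      show "G C \<in> circuits E Ind \<and> f \<in> G C \<and> G C \<subseteq> (K0 \<union> C1 - {e}) \<union> (C - K0) \<and>
         (C - K0) \<inter> (K0 \<union> C1) = {} \<and> G C \<inter> (C - K0) \<noteq> {} \<and> C - K0 \<subseteq> I \<union> ter ` P"
        using Gp[OF C] False C PD(4) unfolding D'_def by blast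
    next
      fix C C' assume "C \<in> D \<inter> D'" "C' \<in> D \<inter> D'" "C \<noteq> C'"
      then show "(C - K0) \<inter> (C' - K0) = {}" using PD(7) by blast
    qed
    then show ?thesis by blast
  qed
qed

end


lemma res_props:
  assumes P: "b_path_system E IM IN BM BN k P" and D: "\<forall>C\<in>D. finite C"
    and pd: "\<forall>C\<in>D. \<forall>C'\<in>D. C \<noteq> C' \<longrightarrow> (C - K0) \<inter> (C' - K0) = {}"
    and h: "inj_on h D" "h ` D \<subseteq> P"
    and R: "R = (\<lambda>C. (C - K0) \<union> (\<Union>p\<in>{p\<in>P. ter p \<in> C - K0}. set p) \<union> set (h C))"
  shows "\<forall>C\<in>D. finite (R C) \<and> R C \<noteq> {}" and "\<forall>v. finite {C\<in>D. v \<in> R C}"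
proof -
  show "\<forall>C\<in>D. finite (R C) \<and> R C \<noteq> {}"
  proof
    fix C assume C: "C \<in> D"
    have "inj_on ter {p\<in>P. ter p \<in> C - K0}"
      by (rule inj_onI) (use bps_ter_inj[OF P] in blast)
    moreover have "ter ` {p\<in>P. ter p \<in> C - K0} \<subseteq> C - K0" by blast
    moreover have "finite (C - K0)" using D C by blast
    ultimately have "finite {p\<in>P. ter p \<in> C - K0}" by (rule inj_on_finite)
    then have "finite (\<Union>p\<in>{p\<in>P. ter p \<in> C - K0}. set p)" by simp
    then have "finite (R C)" using D C unfolding R by simp
    moreover have "h C \<noteq> []" using bps_D(2)[OF P] h C by blast
    then have "R C \<noteq> {}" unfolding R by simp
    ultimately show "finite (R C) \<and> R C \<noteq> {}" by blast
  qed
  show "\<forall>v. finite {C\<in>D. v \<in> R C}"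
  proof
    fix v
    have sub: "{C\<in>D. v \<in> R C} \<subseteq> {C\<in>D. v \<in> C - K0} \<union> {C\<in>D. \<exists>p\<in>P. ter p \<in> C - K0 \<and> v \<in> set p}
           \<union> {C\<in>D. v \<in> set (h C)}" unfolding R by blast
    have f1: "finite {C\<in>D. v \<in> C - K0}"
      by (rule subsingleton_finite) (use pd in blast)
    have f2: "finite {C\<in>D. \<exists>p\<in>P. ter p \<in> C - K0 \<and> v \<in> set p}"
    proof (rule subsingleton_finite)
      fix a b assume a: "a \<in> {C\<in>D. \<exists>p\<in>P. ter p \<in> C - K0 \<and> v \<in> set p}"
        and b: "b \<in> {C\<in>D. \<exists>p\<in>P. ter p \<in> C - K0 \<and> v \<in> set p}"
      obtain p where p: "p \<in> P" "ter p \<in> a - K0" "v \<in> set p" using a by blast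
      obtain q where q: "q \<in> P" "ter q \<in> b - K0" "v \<in> set q" using b by blast
      have "p = q" using bps_D(4)[OF P p(1) q(1)] p(3) q(3) by blast
      then show "a = b" using pd a b p q by blast
    qed
    have f3: "finite {C\<in>D. v \<in> set (h C)}"
    proof (rule subsingleton_finite)
      fix a b assume a: "a \<in> {C\<in>D. v \<in> set (h C)}" and b: "b \<in> {C\<in>D. v \<in> set (h C)}"
      have "h a = h b" using bps_D(4)[OF P, of "h a" "h b"] a b h by blast
      then show "a = b" using h(1) a b unfolding inj_on_def by blast
    qed
    show "finite {C\<in>D. v \<in> R C}" by (rule finite_subset[OF sub]) (intro finite_UnI f1 f2 f3)
  qed
qed

lemma avoid:
  assumes K: "infinite K" and D': "|D'| =o |K|" "D' \<subseteq> D" and R: "\<forall>v. finite {C\<in>D. v \<in> R C}"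
    and U: "|U| <o |K|"
  shows "\<exists>C\<in>D'. R C \<inter> U = {}"
proof (rule ccontr)
  assume no: "\<not> ?thesis"
  have "|\<Union>v\<in>U. {C\<in>D. v \<in> R C}| <o |K|" using UN_finite_less[OF K U, of "\<lambda>v. {C\<in>D. v \<in> R C}"] R by blast
  moreover have "D' \<subseteq> (\<Union>v\<in>U. {C\<in>D. v \<in> R C})" using no D'(2) by blast
  then have "|D'| \<le>o |\<Union>v\<in>U. {C\<in>D. v \<in> R C}|" by (rule card_of_mono1)
  ultimately have "|D'| <o |K|" using ordLeq_ordLess_trans by blast
  then show False using D'(1) not_ordLess_ordIso by blast
qed


context fmat
begin

lemma popD':
  assumes K: "infinite K" and pop: "popular E Ind IN I BM BN |K| K0" and Z: "finite Z"
  obtains P D where "b_path_system E Ind IN BM BN |K| P" "D \<subseteq> circuits E Ind" "|D| =o |K|"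
    "\<forall>C\<in>D. C - K0 \<subseteq> I \<union> ter ` P" "\<forall>C\<in>D. K0 \<subseteq> C" "finite K0"
    "\<forall>C\<in>D. \<forall>C'\<in>D. C \<noteq> C' \<longrightarrow> (C - K0) \<inter> (C' - K0) = {}"
    "\<forall>C\<in>D. (C - K0) \<inter> Z = {}" "\<forall>C\<in>D. finite C"
    "\<exists>h. inj_on h D \<and> h ` D \<subseteq> P"
proof -
  obtain P D where PD: "b_path_system E Ind IN BM BN |K| P" "D \<subseteq> circuits E Ind" "|D| =o |K|"
    "\<forall>C\<in>D. C - K0 \<subseteq> I \<union> ter ` P" "\<forall>C\<in>D. K0 \<subseteq> C" "finite K0"
    "\<forall>C\<in>D. \<forall>C'\<in>D. C \<noteq> C' \<longrightarrow> (C - K0) \<inter> (C' - K0) = {}"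
    using pop_unpack[OF K pop] by metis
  define D' where "D' = {C. (C - K0) \<inter> Z = {}}"
  have "finite {C\<in>D. (C - K0) \<inter> Z \<noteq> {}}"
  proof -
    have "{C\<in>D. (C - K0) \<inter> Z \<noteq> {}} \<subseteq> (\<Union>z\<in>Z. {C\<in>D. z \<in> C - K0})" by blast
    moreover have "\<forall>z\<in>Z. finite {C\<in>D. z \<in> C - K0}"
    proof
      fix z show "finite {C\<in>D. z \<in> C - K0}"
        by (rule subsingleton_finite) (use PD(7) in blast)
    qed
    ultimately show ?thesis using Z by (meson finite_UN_I finite_subset)
  qed
  moreover have "D - D' = {C\<in>D. (C - K0) \<inter> Z \<noteq> {}}" unfolding D'_def by blast
  ultimately have "finite (D - D')" by simp
  then have DD: "|D \<inter> D'| =o |K|" using diff_finite[OF K PD(3)] by blast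
  have "|D \<inter> D'| =o |P|"
    using ordIso_transitive[OF DD ordIso_symmetric[OF bps_D(5)[OF PD(1)]]] .
  then have "|D \<inter> D'| \<le>o |P|" using ordIso_iff_ordLeq by blast
  then have hh: "\<exists>h. inj_on h (D \<inter> D') \<and> h ` (D \<inter> D') \<subseteq> P" using card_of_ordLeq[of "D \<inter> D'" P] by simp
  have fC: "\<forall>C\<in>D \<inter> D'. finite C" using PD(2) circuit_finite by blast
  have ZZ: "\<forall>C\<in>D \<inter> D'. (C - K0) \<inter> Z = {}" unfolding D'_def by blast
  show ?thesis
  proof (rule that[of P "D \<inter> D'"])
    show "D \<inter> D' \<subseteq> circuits E Ind" using PD(2) by blast
    show "\<forall>C\<in>D \<inter> D'. C - K0 \<subseteq> I \<union> ter ` P" using PD(4) by blast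
    show "\<forall>C\<in>D \<inter> D'. K0 \<subseteq> C" using PD(5) by blast
    show "\<forall>C\<in>D \<inter> D'. \<forall>C'\<in>D \<inter> D'. C \<noteq> C' \<longrightarrow> (C - K0) \<inter> (C' - K0) = {}" using PD(7) by blast
  qed (use PD(1) DD PD(6) ZZ fC hh in auto)
qed

lemma caseC:
  assumes K: "infinite K" and pop0: "popular E Ind IN I BM BN |K| K0"
    and pop1: "popular E Ind IN I BM BN |K| K1"
    and e: "e \<in> K0 \<inter> K1" and f: "f \<in> (K0 - K1) \<union> (K1 - K0)"
  shows "\<exists>G. (G \<in> circuits E Ind \<or> popular E Ind IN I BM BN |K| G) \<and> f \<in> G \<and> G \<subseteq> (K0 \<union> K1) - {e}"
proof -
  have fK0: "finite K0" by (rule pop_unpack[OF K pop0]) assumption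
  have fK1: "finite K1" by (rule pop_unpack[OF K pop1]) assumption
  obtain P0 D0 where PD0: "b_path_system E Ind IN BM BN |K| P0" "D0 \<subseteq> circuits E Ind" "|D0| =o |K|"
    "\<forall>C\<in>D0. C - K0 \<subseteq> I \<union> ter ` P0" "\<forall>C\<in>D0. K0 \<subseteq> C"
    "\<forall>C\<in>D0. \<forall>C'\<in>D0. C \<noteq> C' \<longrightarrow> (C - K0) \<inter> (C' - K0) = {}"
    "\<forall>C\<in>D0. (C - K0) \<inter> K1 = {}" "\<forall>C\<in>D0. finite C"
    and "\<exists>h. inj_on h D0 \<and> h ` D0 \<subseteq> P0"
    by (rule popD'[OF K pop0 fK1])
  then obtain h0 where h0: "inj_on h0 D0" "h0 ` D0 \<subseteq> P0" by blast
  obtain P1 D1 where PD1: "b_path_system E Ind IN BM BN |K| P1" "D1 \<subseteq> circuits E Ind" "|D1| =o |K|"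
    "\<forall>C\<in>D1. C - K1 \<subseteq> I \<union> ter ` P1" "\<forall>C\<in>D1. K1 \<subseteq> C"
    "\<forall>C\<in>D1. \<forall>C'\<in>D1. C \<noteq> C' \<longrightarrow> (C - K1) \<inter> (C' - K1) = {}"
    "\<forall>C\<in>D1. (C - K1) \<inter> K0 = {}" "\<forall>C\<in>D1. finite C"
    and "\<exists>h. inj_on h D1 \<and> h ` D1 \<subseteq> P1"
    by (rule popD'[OF K pop1 fK0])
  then obtain h1 where h1: "inj_on h1 D1" "h1 ` D1 \<subseteq> P1" by blast
  define R0 where "R0 = (\<lambda>C. (C - K0) \<union> (\<Union>p\<in>{p\<in>P0. ter p \<in> C - K0}. set p) \<union> set (h0 C))"
  define R1 where "R1 = (\<lambda>C. (C - K1) \<union> (\<Union>p\<in>{p\<in>P1. ter p \<in> C - K1}. set p) \<union> set (h1 C))"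
  have R0p: "\<forall>C\<in>D0. finite (R0 C) \<and> R0 C \<noteq> {}" "\<forall>v. finite {C\<in>D0. v \<in> R0 C}"
    using res_props[OF PD0(1) PD0(8) PD0(6) h0 R0_def] by blast+
  have R1p: "\<forall>C\<in>D1. finite (R1 C) \<and> R1 C \<noteq> {}" "\<forall>v. finite {C\<in>D1. v \<in> R1 C}"
    using res_props[OF PD1(1) PD1(8) PD1(6) h1 R1_def] by blast+
  define A where "A = {x. fst x \<in> D0 \<and> snd x \<in> D1 \<and> R0 (fst x) \<inter> R1 (snd x) = {}}"
  define R where "R = (\<lambda>x. R0 (fst x) \<union> R1 (snd x))"
  have RA: "\<forall>a\<in>A. R a \<noteq> {} \<and> finite (R a)" using R0p(1) R1p(1) unfolding A_def R_def by blast
  have ext: "\<exists>a\<in>A. R a \<inter> U = {}" if U: "|U| <o |K|" for U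
  proof -
    obtain C where C: "C \<in> D0" "R0 C \<inter> U = {}" using avoid[OF K PD0(3) subset_refl R0p(2) U] by blast
    have "|R0 C| <o |K|" using fin_less[OF _ K] R0p(1) C(1) by blast
    then have U': "|U \<union> R0 C| <o |K|" using card_of_Un_ordLess_infinite[OF K U] by blast
    obtain C' where C': "C' \<in> D1" "R1 C' \<inter> (U \<union> R0 C) = {}" using avoid[OF K PD1(3) subset_refl R1p(2) U'] by blast
    have "(C, C') \<in> A" unfolding A_def using C C' by auto
    moreover have "R (C, C') \<inter> U = {}" unfolding R_def using C C' by auto
    ultimately show ?thesis by blast
  qed
  obtain S where S: "S \<subseteq> A" "|S| =o |K|" "\<forall>x\<in>S. \<forall>y\<in>S. x \<noteq> y \<longrightarrow> R x \<inter> R y = {}"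
    using zorn_select[OF K RA ext] by blast
  have SA: "\<And>x. x \<in> S \<Longrightarrow> fst x \<in> D0 \<and> snd x \<in> D1 \<and> R0 (fst x) \<inter> R1 (snd x) = {}"
    using S(1) unfolding A_def by blast
  define G where "G = (\<lambda>x. SOME G. G \<in> circuits E Ind \<and> f \<in> G \<and> G \<subseteq> (fst x \<union> snd x) - {e})"
  have Gp: "G x \<in> circuits E Ind \<and> f \<in> G x \<and> G x \<subseteq> (fst x \<union> snd x) - {e}" if x: "x \<in> S" for x
  proof -
    have x0: "fst x \<in> D0" and x1: "snd x \<in> D1" using SA[OF x] by auto
    have C0: "fst x \<in> circuits E Ind" using x0 PD0(2) by blast
    have C1: "snd x \<in> circuits E Ind" using x1 PD1(2) by blast
    have eC: "e \<in> fst x \<inter> snd x" using e PD0(5) PD1(5) x0 x1 by blast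
    have "f \<in> (fst x - snd x) \<union> (snd x - fst x)"
    proof (cases "f \<in> K0")
      case True
      then have "f \<notin> K1" using f by blast
      then have "f \<notin> snd x" using PD1(7) x1 True by blast
      then show ?thesis using True PD0(5) x0 by blast
    next
      case False
      then have "f \<in> K1" using f by blast
      then have "f \<notin> fst x" using PD0(7) x0 False by blast
      then show ?thesis using \<open>f \<in> K1\<close> PD1(5) x1 by blast
    qed
    then have "\<exists>G. G \<in> circuits E Ind \<and> f \<in> G \<and> G \<subseteq> (fst x \<union> snd x) - {e}"
      using strong_elim[OF C0 C1 eC] by blast
    then show ?thesis unfolding G_def by (rule someI_ex)
  qed
  define W where "W = (\<lambda>x. (fst x - K0) \<union> (snd x - K1))"
  have WR: "\<And>x. W x \<subseteq> R x" unfolding W_def R_def R0_def R1_def by blast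
  have GZW: "\<And>x. x \<in> S \<Longrightarrow> G x \<subseteq> ((K0 \<union> K1) - {e}) \<union> W x" using Gp unfolding W_def by blast
  show ?thesis
  proof (cases "\<exists>x\<in>S. G x \<inter> W x = {}")
    case True
    then obtain x where x: "x \<in> S" "G x \<inter> W x = {}" by blast
    then have "G x \<subseteq> (K0 \<union> K1) - {e}" using GZW[OF x(1)] by blast
    then show ?thesis using Gp[OF x(1)] by blast
  next
    case False
    define P' where "P' = {p\<in>P0. \<exists>x\<in>S. ter p \<in> fst x - K0 \<or> p = h0 (fst x)}
                       \<union> {p\<in>P1. \<exists>x\<in>S. ter p \<in> snd x - K1 \<or> p = h1 (snd x)}"
    have own: "\<And>p. p \<in> P' \<Longrightarrow> (p \<in> P0 \<and> (\<exists>x\<in>S. set p \<subseteq> R0 (fst x))) \<or> (p \<in> P1 \<and> (\<exists>x\<in>S. set p \<subseteq> R1 (snd x)))"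
      unfolding P'_def R0_def R1_def by blast
    have bp: "\<forall>p\<in>P'. b_path E Ind IN BM BN p" using bps_D(1)[OF PD0(1)] bps_D(1)[OF PD1(1)] unfolding P'_def by blast
    have disj: "\<forall>p\<in>P'. \<forall>q\<in>P'. p \<noteq> q \<longrightarrow> set p \<inter> set q = {}"
    proof (intro ballI impI)
      fix p q assume pq: "p \<in> P'" "q \<in> P'" "p \<noteq> q"
      have cross: "set a \<inter> set b = {}" if "a' \<in> S" "b' \<in> S" "set a \<subseteq> R0 (fst a')" "set b \<subseteq> R1 (snd b')"
        for a b :: "'a list" and a' b'
      proof (cases "a' = b'")
        case True
        then show ?thesis using that SA[OF that(1)] by blast
      next
        case False
        then have "R a' \<inter> R b' = {}" using S(3) that by blast
        then show ?thesis using that unfolding R_def by blast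
      qed
      show "set p \<inter> set q = {}"
      proof (cases "p \<in> P0 \<and> q \<in> P0")
        case True
        then show ?thesis using bps_D(4)[OF PD0(1)] pq by blast
      next
        case n0: False
        show ?thesis
        proof (cases "p \<in> P1 \<and> q \<in> P1")
          case True
          then show ?thesis using bps_D(4)[OF PD1(1)] pq by blast
        next
          case False
          then consider (a) "p \<in> P0 \<and> (\<exists>x\<in>S. set p \<subseteq> R0 (fst x))" "q \<in> P1 \<and> (\<exists>x\<in>S. set q \<subseteq> R1 (snd x))"
            | (b) "q \<in> P0 \<and> (\<exists>x\<in>S. set q \<subseteq> R0 (fst x))" "p \<in> P1 \<and> (\<exists>x\<in>S. set p \<subseteq> R1 (snd x))"
            using own[OF pq(1)] own[OF pq(2)] n0 by blast
          then show ?thesis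
          proof cases
            case a
            then obtain x y where "x \<in> S" "y \<in> S" "set p \<subseteq> R0 (fst x)" "set q \<subseteq> R1 (snd y)" by blast
            then show ?thesis using cross[of x y p q] by blast
          next
            case b
            then obtain x y where "x \<in> S" "y \<in> S" "set q \<subseteq> R0 (fst x)" "set p \<subseteq> R1 (snd y)" by blast
            then show ?thesis using cross[of x y q p] by blast
          qed
        qed
      qed
    qed
    have card_le: "|P'| \<le>o |K|"
    proof -
      have "|P0| \<le>o |K|" "|P1| \<le>o |K|"
        using bps_D(5)[OF PD0(1)] bps_D(5)[OF PD1(1)] ordIso_iff_ordLeq by blast+
      then have "|P0 \<union> P1| \<le>o |K|"
        using card_of_Un_ordLeq_infinite_Field[of "|K|" P0 P1] K card_of_Card_order[of K] Field_card_of[of K] by simp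
      moreover have "|P'| \<le>o |P0 \<union> P1|" by (rule card_of_mono1) (auto simp: P'_def)
      ultimately show ?thesis using ordLeq_transitive by blast
    qed
    have card_ge: "|K| \<le>o |P'|"
    proof -
      have "inj_on (\<lambda>x. h0 (fst x)) S"
      proof (rule inj_onI)
        fix x y assume xy: "x \<in> S" "y \<in> S" "h0 (fst x) = h0 (fst y)"
        show "x = y"
        proof (rule ccontr)
          assume "x \<noteq> y"
          then have "R x \<inter> R y = {}" using S(3) xy by blast
          moreover have "h0 (fst x) \<noteq> []" using bps_D(2)[OF PD0(1)] h0(2) SA[OF xy(1)] by blast
          moreover have "set (h0 (fst x)) \<subseteq> R x" "set (h0 (fst y)) \<subseteq> R y" unfolding R_def R0_def by blast+
          ultimately show False using xy(3) by (metis disjoint_iff last_in_set subsetD)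
        qed
      qed
      moreover have "(\<lambda>x. h0 (fst x)) ` S \<subseteq> P'" using h0(2) SA unfolding P'_def by blast
      ultimately have "|S| \<le>o |P'|" using card_of_ordLeq by blast
      then show ?thesis using S(2) ordIso_symmetric ordIso_ordLeq_trans by blast
    qed
    have bps: "b_path_system E Ind IN BM BN |K| P'"
      unfolding b_path_system_def using bp disj card_le card_ge ordIso_iff_ordLeq by blast
    have fZ: "f \<in> K0 \<union> K1" using f by blast
    have "\<exists>T. popular E Ind IN I BM BN |K| T \<and> f \<in> T \<and> T \<subseteq> (K0 \<union> K1) - {e}"
    proof (rule FL[OF K S(2) _ fZ _ _ bps, where W=W and G=G])
      show "finite (K0 \<union> K1)" using fK0 fK1 by simp
    next
      fix x assume x: "x \<in> S"
      have x0: "fst x \<in> D0" and x1: "snd x \<in> D1" using SA[OF x] by auto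
      have WZ: "W x \<inter> (K0 \<union> K1) = {}" using PD0(7) PD1(7) x0 x1 unfolding W_def by blast
      have WP: "W x \<subseteq> I \<union> ter ` P'"
      proof
        fix w assume w: "w \<in> W x"
        show "w \<in> I \<union> ter ` P'"
        proof (cases "w \<in> fst x - K0")
          case True
          then have "w \<in> I \<union> ter ` P0" using PD0(4) x0 by blast
          then show ?thesis using True x unfolding P'_def by blast
        next
          case False
          then have w1: "w \<in> snd x - K1" using w unfolding W_def by blast
          then have "w \<in> I \<union> ter ` P1" using PD1(4) x1 by blast
          then show ?thesis using w1 x unfolding P'_def by blast
        qed
      qed
      show "G x \<in> circuits E Ind \<and> f \<in> G x \<and> G x \<subseteq> (K0 \<union> K1 - {e}) \<union> W x \<and>
         W x \<inter> (K0 \<union> K1) = {} \<and> G x \<inter> W x \<noteq> {} \<and> W x \<subseteq> I \<union> ter ` P'"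
        using Gp[OF x] GZW[OF x] False x WZ WP by blast
    next
      fix x y assume "x \<in> S" "y \<in> S" "x \<noteq> y"
      then show "W x \<inter> W y = {}" using S(3) WR by blast
    qed
    then show ?thesis by blast
  qed
qed

end


theorem lemma4p3:
  fixes E :: "'a set" and \<I>M \<I>N :: "'a set set" and I JM JN :: "'a set"
  assumes M: "finitary_matroid E \<I>M"
      and N: "finitary_matroid E \<I>N"
      and I_max: "maximal_in (\<I>M \<inter> \<I>N) I"
      and kappa_regular: "regularCard (mrank (contract \<I>N I))"
      and kappa_uncountable: "(natLeq, mrank (contract \<I>N I)) \<in> ordLess"
      and rank_M: "(mrank (contract \<I>M I), mrank (contract \<I>N I)) \<in> ordLess"
      and JM: "maximal_in (contract \<I>M I) JM"
      and JN: "maximal_in (contract \<I>N I) JN"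
  shows "\<forall>F0 \<in> circuits E \<I>M \<union> {K. popular E \<I>M \<I>N I (I \<union> JM) (I \<union> JN) (mrank (contract \<I>N I)) K}.
         \<forall>F1 \<in> circuits E \<I>M \<union> {K. popular E \<I>M \<I>N I (I \<union> JM) (I \<union> JN) (mrank (contract \<I>N I)) K}.
         \<forall>e \<in> F0 \<inter> F1. \<forall>f \<in> (F0 - F1) \<union> (F1 - F0).
           (\<exists>G \<in> circuits E \<I>M \<union> {K. popular E \<I>M \<I>N I (I \<union> JM) (I \<union> JN) (mrank (contract \<I>N I)) K}.
              f \<in> G \<and> G \<subseteq> (F0 \<union> F1) - {e})"
  proof -
  interpret fmat E "\<I>M" using M by unfold_locales
  define K where "K = (SOME B. maximal_in (contract \<I>N I) B)"
  have kap: "mrank (contract \<I>N I) = |K|" unfolding mrank_def K_def ..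
  have "natLeq \<le>o |K|" using kappa_uncountable kap ordLess_imp_ordLeq by simp
  then have Kinf: "infinite K" using infinite_iff_natLeq_ordLeq[of K] by simp
  let ?BM = "I \<union> JM" and ?BN = "I \<union> JN"
  have main: "\<exists>G. (G \<in> circuits E \<I>M \<or> popular E \<I>M \<I>N I ?BM ?BN |K| G) \<and> f \<in> G \<and> G \<subseteq> (F0 \<union> F1) - {e}"
    if F0: "F0 \<in> circuits E \<I>M \<or> popular E \<I>M \<I>N I ?BM ?BN |K| F0"
      and F1: "F1 \<in> circuits E \<I>M \<or> popular E \<I>M \<I>N I ?BM ?BN |K| F1"
      and e: "e \<in> F0 \<inter> F1" and f: "f \<in> (F0 - F1) \<union> (F1 - F0)" for F0 F1 e f
  proof -
    consider (cc) "F0 \<in> circuits E \<I>M" "F1 \<in> circuits E \<I>M"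
      | (pc) "popular E \<I>M \<I>N I ?BM ?BN |K| F0" "F1 \<in> circuits E \<I>M"
      | (cp) "F0 \<in> circuits E \<I>M" "popular E \<I>M \<I>N I ?BM ?BN |K| F1"
      | (pp) "popular E \<I>M \<I>N I ?BM ?BN |K| F0" "popular E \<I>M \<I>N I ?BM ?BN |K| F1"
      using F0 F1 by blast
    then show ?thesis
    proof cases
      case cc
      then show ?thesis using strong_elim[OF cc e f] by blast
    next
      case pc
      then show ?thesis using caseB[OF Kinf pc e f] by blast
    next
      case cp
      have e': "e \<in> F1 \<inter> F0" and f': "f \<in> (F1 - F0) \<union> (F0 - F1)" using e f by blast+
      obtain G where "(G \<in> circuits E \<I>M \<or> popular E \<I>M \<I>N I ?BM ?BN |K| G)" "f \<in> G" "G \<subseteq> (F1 \<union> F0) - {e}"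
        using caseB[OF Kinf cp(2) cp(1) e' f'] by blast
      then show ?thesis by blast
    next
      case pp
      then show ?thesis using caseC[OF Kinf pp e f] by blast
    qed
  qed
  show ?thesis unfolding kap
  proof (intro ballI)
    fix F0 F1 e f
    assume A0: "F0 \<in> circuits E \<I>M \<union> {K'. popular E \<I>M \<I>N I ?BM ?BN |K| K'}"
      and A1: "F1 \<in> circuits E \<I>M \<union> {K'. popular E \<I>M \<I>N I ?BM ?BN |K| K'}"
      and e: "e \<in> F0 \<inter> F1" and f: "f \<in> (F0 - F1) \<union> (F1 - F0)"
    have F0: "F0 \<in> circuits E \<I>M \<or> popular E \<I>M \<I>N I ?BM ?BN |K| F0" using A0 by simp
    have F1: "F1 \<in> circuits E \<I>M \<or> popular E \<I>M \<I>N I ?BM ?BN |K| F1" using A1 by simp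
    obtain G where G: "G \<in> circuits E \<I>M \<or> popular E \<I>M \<I>N I ?BM ?BN |K| G" "f \<in> G" "G \<subseteq> (F0 \<union> F1) - {e}"
      using main[OF F0 F1 e f] by blast
    have "G \<in> circuits E \<I>M \<union> {K'. popular E \<I>M \<I>N I ?BM ?BN |K| K'}" using G(1) by simp
    then show "\<exists>G\<in>circuits E \<I>M \<union> {K'. popular E \<I>M \<I>N I ?BM ?BN |K| K'}. f \<in> G \<and> G \<subseteq> (F0 \<union> F1) - {e}"
      using G(2,3) by blast
  qed
qed

end
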